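(* Under the hypotheses and notation of the following setup: $d>0$, $\ell$ a certified lower bound with certificate matrix $\Lambda$, $f(d,\ell)=1$, $i\in\{1,\dots,m\}$, $L_i:=a_i^\top y(d,\ell)-\gamma_i(d,\ell)$, $\hat\lambda_i:=\gamma_i(d,\ell)Dt(d,\ell)-DA^\top B(d)^{-1}a_i$, $\tilde\lambda_i:=\Lambda\hat\lambda_i^-+\hat\lambda_i^+$: if $L_i>u_i$, then $\bar\lambda_i:=\tilde\lambda_i+e_i$ satisfies $A\bar\lambda_i=0$, $\bar\lambda_i\ge0$, $u^\top\bar\lambda_i<0$ (so it is a type-L certificate of infeasibility of $A^\top x\le u$).
   Context: Standing assumption: $A=[a_1|\cdots|a_m]\in\mathbb{R}^{n\times m}$ has columns of unit Euclidean norm and $\{A\lambda:\lambda\ge0\}=\mathbb{R}^n$; $u\in\mathbb{R}^m$. $D=\mathrm{diag}(d)$; $r(\ell)=\tfrac12(u+\ell)$, $v(\ell)=\tfrac12(u-\ell)$, $B(d)=ADA^\top$, $y(d,\ell)=B(d)^{-1}ADr(\ell)$, $t(d,\ell)=A^\top y(d,\ell)-r(\ell)$, $f(d,\ell)=v(\ell)^\top Dv(\ell)-t(d,\ell)^\top Dt(d,\ell)$, $\gamma_i(d,\ell)=\sqrt{f(d,\ell)a_i^\top B(d)^{-1}a_i}$ when $f(d,\ell)>0$. $\ell$ is a certified lower bound with certificate matrix $\Lambda\in\mathbb{R}^{m\times m}$ if $A\Lambda=-A$, $\Lambda\ge0$, $-\Lambda^\top u\ge\ell$. $w^\pm$ denote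 positive/negative parts; $e_i$ is the $i$-th unit vector. *)

theory Defs
  imports "HOL-Analysis.Analysis"
begin

definition nonneg_vec :: "real^'m \<Rightarrow> bool" where
  "nonneg_vec x \<longleftrightarrow> (\<forall>j. 0 \<le> x $ j)"

definition Dmat :: "real^'m \<Rightarrow> real^'m^'m" where
  "Dmat d = (\<chi> i j. if i = j then d $ i else 0)"

definition rvec :: "real^'m \<Rightarrow> real^'m \<Rightarrow> real^'m" where
  "rvec u l = (1/2) *\<^sub>R (u + l)"

definition vvec :: "real^'m \<Rightarrow> real^'m \<Rightarrow> real^'m" where
  "vvec u l = (1/2) *\<^sub>R (u - l)"

definition Bmat :: "real^'m^'n \<Rightarrow> real^'m \<Rightarrow> real^'n^'n" where
  "Bmat A d = A ** Dmat d ** transpose A"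

definition yvec :: "real^'m^'n \<Rightarrow> real^'m \<Rightarrow> real^'m \<Rightarrow> real^'m \<Rightarrow> real^'n" where
  "yvec A u d l = matrix_inv (Bmat A d) *v (A *v (Dmat d *v rvec u l))"

definition tvec :: "real^'m^'n \<Rightarrow> real^'m \<Rightarrow> real^'m \<Rightarrow> real^'m \<Rightarrow> real^'m" where
  "tvec A u d l = transpose A *v yvec A u d l - rvec u l"

definition ffun :: "real^'m^'n \<Rightarrow> real^'m \<Rightarrow> real^'m \<Rightarrow> real^'m \<Rightarrow> real" where
  "ffun A u d l = vvec u l \<bullet> (Dmat d *v vvec u l) - tvec A u d l \<bullet> (Dmat d *v tvec A u d l)"

definition gamma :: "real^'m^'n \<Rightarrow> real^'m \<Rightarrow> real^'m \<Rightarrow> real^'m \<Rightarrow> 'm \<Rightarrow> real" where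
  "gamma A u d l i = sqrt (ffun A u d l * (column i A \<bullet> (matrix_inv (Bmat A d) *v column i A)))"

definition pos_part :: "real^'m \<Rightarrow> real^'m" where
  "pos_part w = (\<chi> j. max (w $ j) 0)"

definition neg_part :: "real^'m \<Rightarrow> real^'m" where
  "neg_part w = (\<chi> j. max (- (w $ j)) 0)"

definition standing_A :: "real^'m^'n \<Rightarrow> bool" where
  "standing_A A \<longleftrightarrow> (\<forall>i. norm (column i A) = 1) \<and> {A *v lam | lam. nonneg_vec lam} = UNIV"

definition certified_lb :: "real^'m^'n \<Rightarrow> real^'m \<Rightarrow> real^'m \<Rightarrow> real^'m^'m \<Rightarrow> bool" where
  "certified_lb A u l Lam \<longleftrightarrow> A ** Lam = - A \<and> (\<forall>i j. 0 \<le> Lam $ i $ j)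
     \<and> (\<forall>j. (- (transpose Lam *v u)) $ j \<ge> l $ j)"

end

theory Submission imports Defs begin
declare transpose_matrix_vector[simp del]

lemma adj: fixes M :: "real^'a^'b" shows "(transpose M *v x) \<bullet> y = x \<bullet> (M *v y)"
  by (metis dot_lmul_matrix transpose_matrix_vector)

lemma Dmat_mv: "Dmat d *v x = (\<chi> j. d$j * x$j)"
proof -
  have "\<And>i. (\<Sum>j\<in>UNIV. (if i = j then d$i else 0) * x$j) = d$i * x$i"
    by (subst sum.cong[OF refl, of _ _ "\<lambda>j. if i = j then d$j*x$j else 0"]) auto
  then show ?thesis unfolding Dmat_def matrix_vector_mult_def vec_eq_iff by simp
qed

lemma inner_D: "(x::real^'m) \<bullet> (Dmat d *v z) = (\<Sum>j\<in>UNIV. d$j * x$j * z$j)"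
  by (simp add: Dmat_mv inner_vec_def algebra_simps)

lemma quad_nonneg: assumes "\<forall>j. 0 < d$j" shows "0 \<le> (x::real^'m) \<bullet> (Dmat d *v x)"
  unfolding inner_D using assms by (intro sum_nonneg) (metis less_imp_le mult_nonneg_nonneg mult.assoc zero_le_square)

lemma quad_zero: assumes "\<forall>j. 0 < d$j" "(x::real^'m) \<bullet> (Dmat d *v x) = 0" shows "x = 0"
proof -
  have "\<forall>j\<in>UNIV. d$j * x$j * x$j = 0"
    using assms(2) unfolding inner_D
    by (subst sum_nonneg_eq_0_iff[symmetric]) (use assms(1) in \<open>auto intro: mult_nonneg_nonneg simp: less_imp_le mult.assoc\<close>)
  then show ?thesis using assms(1) by (auto simp: vec_eq_iff) (metis less_irrefl mult_eq_0_iff)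
qed

lemma Dmat_transpose: "transpose (Dmat d) = Dmat d"
  by (simp add: Dmat_def transpose_def vec_eq_iff)

lemma B_sym: "transpose (Bmat A d) = Bmat A d"
  by (simp add: Bmat_def matrix_transpose_mul Dmat_transpose matrix_mul_assoc)

lemma B_mv: "Bmat A d *v x = A *v (Dmat d *v (transpose A *v x))"
  by (simp add: Bmat_def matrix_vector_mul_assoc matrix_mul_assoc)

lemma B_inv: assumes "standing_A (A::real^'m^'n)" "\<forall>j. 0 < d$j"
  shows "Bmat A d ** matrix_inv (Bmat A d) = mat 1 \<and> matrix_inv (Bmat A d) ** Bmat A d = mat 1"
proof -
  have ker: "\<forall>x. Bmat A d *v x = 0 \<longrightarrow> x = 0"
  proof (intro allI impI)
    fix x assume h: "Bmat A d *v x = 0"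
    have "(transpose A *v x) \<bullet> (Dmat d *v (transpose A *v x)) = x \<bullet> (Bmat A d *v x)"
      by (simp add: adj B_mv)
    also have "\<dots> = 0" using h by simp
    finally have w0: "transpose A *v x = 0" using quad_zero[OF assms(2)] by blast
    from assms(1) have "x \<in> {A *v lam | lam. nonneg_vec lam}" unfolding standing_A_def by auto
    then obtain lam where "x = A *v lam" by auto
    then have "x \<bullet> x = (transpose A *v x) \<bullet> lam" by (simp add: adj)
    then show "x = 0" using w0 by simp
  qed
  then obtain B' where "B' ** Bmat A d = mat 1" using matrix_left_invertible_ker by blast
  then have "invertible (Bmat A d)" using invertible_left_inverse by blast
  then show ?thesis unfolding invertible_def matrix_inv_def by (rule someI_ex)
qed

lemma D_sym: "(x::real^'m) \<bullet> (Dmat d *v z) = z \<bullet> (Dmat d *v x)"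
  unfolding inner_D by (simp add: algebra_simps)

lemma D_scale: "Dmat d *v (c *\<^sub>R x) = c *\<^sub>R (Dmat d *v x)"
  by (rule matrix_vector_mult_scaleR)

lemma neg_mv: "(- M) *v (x::real^'a) = - (M *v x)"
  by (simp add: vec_eq_iff matrix_vector_mult_def sum_negf)

lemma pn: "pos_part h - neg_part h = h"
  by (simp add: vec_eq_iff pos_part_def neg_part_def max_def)

theorem corollary3:
  fixes A :: "real^'m^'n" and u d l :: "real^'m" and Lam :: "real^'m^'m" and i :: 'm
  assumes "standing_A A"
    and "\<forall>j. 0 < d $ j"
    and "certified_lb A u l Lam"
    and "ffun A u d l = 1"
    and "column i A \<bullet> yvec A u d l - gamma A u d l i > u $ i"
  shows "let lhat = gamma A u d l i *\<^sub>R (Dmat d *v tvec A u d l)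
                    - Dmat d *v (transpose A *v (matrix_inv (Bmat A d) *v column i A));
             ltil = Lam *v neg_part lhat + pos_part lhat;
             lbar = ltil + axis i 1
         in A *v lbar = 0 \<and> nonneg_vec lbar \<and> u \<bullet> lbar < 0"
proof -
  define Bi where "Bi = matrix_inv (Bmat A d)"
  define a where "a = column i A"
  define y where "y = yvec A u d l"
  define t where "t = tvec A u d l"
  define r where "r = rvec u l"
  define v where "v = vvec u l"
  define g where "g = gamma A u d l i"
  define z where "z = Bi *v a"
  define w where "w = transpose A *v z"
  define e where "e = g *\<^sub>R t - w"
  define h where "h = Dmat d *v e"
  define P where "P = pos_part h"
  define N where "N = neg_part h"
  define T where "T = t \<bullet> (Dmat d *v t)"
  have hdef: "h = g *\<^sub>R (Dmat d *v t) - Dmat d *v (transpose A *v (matrix_inv (Bmat A d) *v column i A))"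
    by (simp add: h_def e_def matrix_vector_mult_diff_distrib D_scale w_def z_def Bi_def a_def g_def t_def)
  have BB: "Bmat A d *v (Bi *v x) = x" for x
    using B_inv[OF assms(1,2)] by (simp add: Bi_def matrix_vector_mul_assoc)
  have y_eq: "y = Bi *v (A *v (Dmat d *v r))" by (simp add: y_def yvec_def Bi_def r_def)
  have t_eq: "t = transpose A *v y - r" by (simp add: t_def tvec_def y_def r_def)
  have ADt: "A *v (Dmat d *v t) = 0"
  proof -
    have "A *v (Dmat d *v t) = Bmat A d *v y - A *v (Dmat d *v r)"
      by (simp add: t_eq B_mv matrix_vector_mult_diff_distrib)
    then show ?thesis by (simp add: y_eq BB)
  qed
  have ADw: "A *v (Dmat d *v w) = a" by (simp add: w_def B_mv[symmetric] z_def BB)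
  have Ah: "A *v h = - a"
    by (simp add: h_def e_def matrix_vector_mult_diff_distrib D_scale matrix_vector_mult_scaleR ADt ADw)
  have cert: "A ** Lam = - A" "\<forall>i j. 0 \<le> Lam $ i $ j" "\<forall>j. (- (transpose Lam *v u)) $ j \<ge> l $ j"
    using assms(3) unfolding certified_lb_def by auto
  have Pnn: "0 \<le> P$j" for j by (simp add: P_def pos_part_def)
  have Nnn: "0 \<le> N$j" for j by (simp add: N_def neg_part_def)
  have part1: "A *v (Lam *v N + P + axis i 1) = 0"
  proof -
    have "A *v (Lam *v N + P + axis i 1) = (A ** Lam) *v N + A *v P + a"
      by (simp add: matrix_vector_right_distrib matrix_vector_mul_assoc matrix_vector_mult_basis a_def)
    also have "\<dots> = A *v (P - N) + a"
      by (simp add: cert(1) neg_mv matrix_vector_mult_diff_distrib)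
    also have "\<dots> = 0" by (simp add: P_def N_def pn Ah)
    finally show ?thesis .
  qed
  have part2: "nonneg_vec (Lam *v N + P + axis i 1)"
    unfolding nonneg_vec_def
  proof
    fix j
    have "0 \<le> (Lam *v N) $ j"
      unfolding matrix_vector_mult_def using cert(2) Nnn by (simp add: sum_nonneg)
    moreover have "0 \<le> axis i (1::real) $ j" by (simp add: axis_def)
    ultimately show "0 \<le> (Lam *v N + P + axis i 1) $ j" using Pnn[of j] by simp
  qed
  have adjT: "(transpose M *v x) \<bullet> y' = x \<bullet> (M *v y')" for M :: "real^'m^'n" and x y'
    by (rule adj)
  have rDt: "r \<bullet> (Dmat d *v t) = - T"
  proof -
    have "T = (transpose A *v y) \<bullet> (Dmat d *v t) - r \<bullet> (Dmat d *v t)"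
      by (simp add: T_def t_eq[symmetric] inner_diff_left[symmetric])
    also have "(transpose A *v y) \<bullet> (Dmat d *v t) = 0" by (simp add: adjT ADt)
    finally show ?thesis by simp
  qed
  have rDw: "r \<bullet> (Dmat d *v w) = a \<bullet> y"
  proof -
    have "r \<bullet> (Dmat d *v w) = w \<bullet> (Dmat d *v r)" by (rule D_sym)
    also have "\<dots> = z \<bullet> (Bmat A d *v y)" by (simp add: w_def adjT y_eq BB)
    also have "\<dots> = (transpose (Bmat A d) *v z) \<bullet> y" by (simp add: adj)
    also have "\<dots> = a \<bullet> y" by (simp add: B_sym z_def BB)
    finally show ?thesis .
  qed
  have rh: "r \<bullet> h = - g * T - a \<bullet> y"
    by (simp add: h_def e_def matrix_vector_mult_diff_distrib D_scale inner_diff_right rDt rDw)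
  have wDt: "w \<bullet> (Dmat d *v t) = 0" by (simp add: w_def adjT ADt)
  have wDw: "w \<bullet> (Dmat d *v w) = z \<bullet> a"
    using ADw unfolding w_def by (simp add: adjT)
  have za_nn: "0 \<le> z \<bullet> a" using wDw quad_nonneg[OF assms(2), of w] by simp
  have gs: "g = sqrt (z \<bullet> a)"
      by (simp add: g_def gamma_def assms(4) z_def Bi_def a_def inner_commute)
  have g2: "g^2 = z \<bullet> a" using gs za_nn by simp
  have g_nn: "0 \<le> g" using gs za_nn by simp
  have eDe: "e \<bullet> (Dmat d *v e) = g^2 * (1 + T)"
  proof -
    have tDw: "t \<bullet> (Dmat d *v w) = 0" using wDt D_sym by metis
    have "e \<bullet> (Dmat d *v e) = g * g * T - g * (w \<bullet> (Dmat d *v t)) - g * (t \<bullet> (Dmat d *v w)) + w \<bullet> (Dmat d *v w)"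
      by (simp add: e_def matrix_vector_mult_diff_distrib D_scale inner_diff_right inner_diff_left T_def algebra_simps)
    then show ?thesis using wDt tDw wDw g2 by (simp add: power2_eq_square algebra_simps)
  qed
  have vDv: "v \<bullet> (Dmat d *v v) = 1 + T"
    using assms(4) by (simp add: ffun_def v_def T_def t_def)
  have u_eq: "u = r + v" and l_eq: "l = r - v"
    by (simp_all add: r_def v_def rvec_def vvec_def vec_eq_iff algebra_simps)
  have LamN: "u \<bullet> (Lam *v N) \<le> - (l \<bullet> N)"
  proof -
    have "u \<bullet> (Lam *v N) = (transpose Lam *v u) \<bullet> N" by (simp add: adj)
    also have "\<dots> = (\<Sum>j\<in>UNIV. (transpose Lam *v u)$j * N$j)" by (simp add: inner_vec_def)
    also have "\<dots> \<le> (\<Sum>j\<in>UNIV. (- l$j) * N$j)"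
    proof (rule sum_mono)
      fix j
      have "(transpose Lam *v u)$j \<le> - l$j" using cert(3) by (metis le_minus_iff vector_uminus_component)
      then show "(transpose Lam *v u)$j * N$j \<le> (- l$j) * N$j" using Nnn[of j] by (rule mult_right_mono)
    qed
    also have "\<dots> = - (l \<bullet> N)" by (simp add: inner_vec_def sum_negf)
    finally show ?thesis .
  qed
  define \<alpha> where "\<alpha> = (\<chi> j. sqrt (d$j) * \<bar>v$j\<bar>)"
  define \<beta> where "\<beta> = (\<chi> j. \<bar>h$j\<bar> / sqrt (d$j))"
  have hj: "h$j = d$j * e$j" for j by (simp add: h_def Dmat_mv)
  have sq: "sqrt (d$j) * sqrt (d$j) = d$j" "sqrt (d$j) \<noteq> 0" for j
    using assms(2) by (auto simp: less_imp_le) (metis less_irrefl)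
  have aa: "\<alpha> \<bullet> \<alpha> = 1 + T"
  proof -
    have "\<alpha> \<bullet> \<alpha> = (\<Sum>j\<in>UNIV. d$j * v$j * v$j)"
      unfolding \<alpha>_def inner_vec_def
    proof (intro sum.cong refl)
      fix j
      have "sqrt (d$j) * \<bar>v$j\<bar> * (sqrt (d$j) * \<bar>v$j\<bar>) = (sqrt (d$j) * sqrt (d$j)) * (\<bar>v$j\<bar> * \<bar>v$j\<bar>)"
        by (simp only: mult_ac)
      also have "\<dots> = d$j * v$j * v$j" by (simp only: sq(1) abs_mult_self_eq mult.assoc)
      finally show "(\<chi> j. sqrt (d$j) * \<bar>v$j\<bar>) $ j \<bullet> (\<chi> j. sqrt (d$j) * \<bar>v$j\<bar>) $ j = d$j * v$j * v$j" by simp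
    qed
    then show ?thesis using vDv inner_D by metis
  qed
  have bb: "\<beta> \<bullet> \<beta> = g^2 * (1 + T)"
  proof -
    have "\<beta> \<bullet> \<beta> = (\<Sum>j\<in>UNIV. d$j * e$j * e$j)"
      unfolding \<beta>_def inner_vec_def
    proof (intro sum.cong refl)
      fix j
      have "\<bar>h$j\<bar> / sqrt (d$j) * (\<bar>h$j\<bar> / sqrt (d$j)) = h$j * h$j / d$j"
        by (simp only: times_divide_times_eq abs_mult_self_eq sq(1))
      also have "\<dots> = d$j * e$j * e$j" using hj[of j] sq[of j] assms(2) by (simp add: field_simps)
      finally show "(\<chi> j. \<bar>h$j\<bar> / sqrt (d$j)) $ j \<bullet> (\<chi> j. \<bar>h$j\<bar> / sqrt (d$j)) $ j = d$j * e$j * e$j" by simp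
    qed
    then show ?thesis using eDe inner_D by metis
  qed
  have vPN: "v \<bullet> (P + N) \<le> \<alpha> \<bullet> \<beta>"
  proof -
    have "v \<bullet> (P + N) = (\<Sum>j\<in>UNIV. v$j * \<bar>h$j\<bar>)"
      unfolding inner_vec_def P_def N_def pos_part_def neg_part_def by (intro sum.cong refl) (auto simp: max_def abs_if)
    also have "\<dots> \<le> (\<Sum>j\<in>UNIV. \<bar>v$j\<bar> * \<bar>h$j\<bar>)"
      by (intro sum_mono mult_right_mono) auto
    also have "\<dots> = \<alpha> \<bullet> \<beta>"
      unfolding \<alpha>_def \<beta>_def inner_vec_def using sq by (intro sum.cong refl) simp
    finally show ?thesis .
  qed
  have T1: "0 \<le> 1 + T" using vDv quad_nonneg[OF assms(2), of v] by simp
  have CS: "\<alpha> \<bullet> \<beta> \<le> g * (1 + T)"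
  proof -
    have "\<alpha> \<bullet> \<beta> \<le> norm \<alpha> * norm \<beta>" by (rule norm_cauchy_schwarz)
    also have "\<dots> = sqrt (1 + T) * sqrt (g^2 * (1 + T))" by (simp add: norm_eq_sqrt_inner aa bb)
    also have "\<dots> = g * (1 + T)"
      using T1 g_nn by (simp add: real_sqrt_mult)
    finally show ?thesis .
  qed
  have part3: "u \<bullet> (Lam *v N + P + axis i 1) < 0"
  proof -
    have "u \<bullet> (Lam *v N + P + axis i 1) = u \<bullet> (Lam *v N) + u \<bullet> P + u$i"
      by (simp add: inner_add_right inner_axis)
    also have "\<dots> \<le> - (l \<bullet> N) + u \<bullet> P + u$i" using LamN by simp
    also have "- (l \<bullet> N) + u \<bullet> P = r \<bullet> (P - N) + v \<bullet> (P + N)"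
      by (simp add: u_eq l_eq inner_add_left inner_diff_left inner_add_right inner_diff_right)
    also have "P - N = h" by (simp add: P_def N_def pn)
    also have "r \<bullet> h + v \<bullet> (P + N) + u$i \<le> - g * T - a \<bullet> y + g * (1 + T) + u$i"
      using rh vPN CS by simp
    also have "\<dots> < 0" using assms(5) by (simp add: a_def y_def g_def algebra_simps inner_commute)
    finally show ?thesis .
  qed
  show ?thesis using part1 part2 part3 unfolding Let_def P_def N_def hdef g_def t_def by simp
qed
end
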